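(* For all integers $n\geq0$, \[ \sum_{j=0}^n4^{n-j}C_jH_{n-j}=2^{2n+1}H_{n+1}-\binom{2(n+1)}{n+1}O_{n+1}. \]
   Context: $H_n=\sum_{j=1}^n\frac1j$ ($H_0=0$), $O_n=\sum_{j=1}^n\frac1{2j-1}$ ($O_0=0$), and $C_n=\frac1{n+1}\binom{2n}{n}$ is the $n$th Catalan number. *)

theory Defs
  imports Complex_Main
begin

definition Harm :: "nat \<Rightarrow> real" where
  "Harm n = (\<Sum>j=1..n. 1 / real j)"

definition Odd_harm :: "nat \<Rightarrow> real" where
  "Odd_harm n = (\<Sum>j=1..n. 1 / (2 * real j - 1))"

definition catalan :: "nat \<Rightarrow> real" where
  "catalan n = real ((2*n) choose n) / real (n + 1)"

end

theory Submission
  imports Defs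
begin

definition cb :: "nat \<Rightarrow> real" where
  "cb m = real ((2*m) choose m)"

lemma cb_fact: "cb m = fact (2*m) / (fact m * fact m)"
  unfolding cb_def by (subst binomial_fact) (auto simp: mult_2)

lemma gen0: fixes d e f F :: real assumes "d \<noteq> 0" "f \<noteq> 0"
  shows "d * (2*d*e*F/(d*f*(d*f))) = 2*e*(F/(f*f))"
  using assms by (simp add: field_simps)
lemma gen_alg:
  fixes F f x :: real
  assumes "f > 0" "x \<ge> 0"
  shows "(x + 1) * ((2 * x + 2) * (2 * x + 1) * F / ((x + 1) * f * ((x + 1) * f)))
     = (4 * x + 2) * (F / (f * f))"
proof -
  have "(2 * x + 2) = 2 * (x+1)" "4*x+2 = 2 * (2*x+1)" by simp_all
  then show ?thesis using gen0[of "x+1" f "2*x+1" F] assms by simp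
qed
lemma sumsplit: fixes h :: "nat \<Rightarrow> real"
  shows "(\<Sum>k=1..Suc m. h k) * c = (\<Sum>k=1..m. h k * c) + h (Suc m) * c"
  by (simp add: sum_distrib_right distrib_right)

lemma cb_rec: "real (Suc m) * cb (Suc m) = (4 * real m + 2) * cb m"
proof -
  have e: "2 * Suc m = Suc (Suc (2*m))" by simp
  have f1: "fact (Suc (Suc (2*m))) = (2 * real m + 2) * (2 * real m + 1) * (fact (2*m) :: real)"
    by (simp add: fact_Suc algebra_simps)
  have f2: "fact (Suc m) = (real m + 1) * (fact m :: real)" by (simp add: fact_Suc)
  have p: "(fact m :: real) > 0" by simp
  have s1: "real (Suc m) = real m + 1" by simp
  show ?thesis unfolding cb_fact e f1 f2 s1 using p
    by (intro gen_alg) auto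
qed

lemma cb0 [simp]: "cb 0 = 1" by (simp add: cb_def)

lemma swap_sum:
  fixes g :: "nat \<Rightarrow> nat \<Rightarrow> real"
  shows "(\<Sum>j=0..n. \<Sum>i=1..n-j. g j i) = (\<Sum>i=1..n. \<Sum>j=0..n-i. g j i)"
  apply (simp add: sum.Sigma)
  apply (rule sum.reindex_bij_witness[where i=prod.swap and j=prod.swap])
  apply auto
  done

lemma V_lemma: "(\<Sum>k=1..m. 4^k * cb (m-k) / real k) = 2 * cb m * Odd_harm m"
proof (induction m)
  case 0
  then show ?case by (simp add: Odd_harm_def)
next
  case (Suc m)
  define V where "V = (\<Sum>k=1..m. 4^k * cb (m-k) / real k)"
  define f where "f = (\<lambda>k. (4::real)^k * cb (Suc m - k))"
  have OS: "Odd_harm (Suc m) = Odd_harm m + 1 / (2 * real m + 1)"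
    by (simp add: Odd_harm_def)
  have tm: "4^k * cb (Suc m - k) / real k * real (Suc m)
      = f k - f (Suc k) + (4 * real m + 2) * (4^k * cb (m-k) / real k)"
    if "k \<in> {1..m}" for k
  proof -
    from that have k: "1 \<le> k" "k \<le> m" by auto
    have sm: "Suc m - k = Suc (m - k)" using k by simp
    have r: "real (Suc (m-k)) * cb (Suc (m-k)) = (4 * real (m-k) + 2) * cb (m-k)"
      by (rule cb_rec)
    have rk: "real (m - k) = real m - real k" using k by simp
    have kp: "real k > 0" using k by simp
    have "4^k * cb (Suc m - k) / real k * real (Suc m)
        = 4^k * cb (Suc m - k) + 4^k * (real (Suc (m-k)) * cb (Suc (m-k))) / real k"
      using kp k by (simp add: sm field_simps rk)
    also have "\<dots> = 4^k * cb (Suc m - k) + 4^k * ((4 * real (m-k) + 2) * cb (m-k)) / real k"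
      by (subst r) (rule refl)
    also have "\<dots> = f k - f (Suc k) + (4 * real m + 2) * (4^k * cb (m-k) / real k)"
      using kp unfolding f_def rk by (simp add: field_simps)
    finally show ?thesis .
  qed
  have "(\<Sum>k=1..Suc m. 4^k * cb (Suc m - k) / real k) * real (Suc m)
      = (\<Sum>k=1..m. 4^k * cb (Suc m - k) / real k * real (Suc m)) + 4^Suc m"
    by (subst sumsplit) simp
  also have "(\<Sum>k=1..m. 4^k * cb (Suc m - k) / real k * real (Suc m))
      = (\<Sum>k=1..m. f k - f (Suc k) + (4 * real m + 2) * (4^k * cb (m-k) / real k))"
    by (rule sum.cong[OF refl]) (rule tm)
  also have "\<dots> = (\<Sum>k=1..m. f k - f (Suc k)) + (4 * real m + 2) * V"
    by (simp only: sum.distrib sum_distrib_left V_def)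
  also have "(\<Sum>k=1..m. f k - f (Suc k)) = f 1 - f (Suc m)"
    using sum_Suc_diff[of 1 m "\<lambda>k. - f k"] by simp
  finally have L: "(\<Sum>k=1..Suc m. 4^k * cb (Suc m - k) / real k) * real (Suc m)
      = 4 * cb m + (4 * real m + 2) * V" by (simp add: f_def)
  have R: "2 * cb (Suc m) * Odd_harm (Suc m) * real (Suc m) = 4 * cb m + (4 * real m + 2) * V"
  proof -
    have "2 * cb (Suc m) * Odd_harm (Suc m) * real (Suc m)
        = 2 * (real (Suc m) * cb (Suc m)) * Odd_harm (Suc m)" by simp
    also have "\<dots> = 2 * ((4 * real m + 2) * cb m) * (Odd_harm m + 1 / (2 * real m + 1))"
      by (simp only: cb_rec OS)
    also have "\<dots> = 4 * cb m + (4 * real m + 2) * (2 * cb m * Odd_harm m)"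
      by (simp add: field_simps)
    finally show ?thesis using Suc.IH V_def by simp
  qed
  have c: "real (Suc m) \<noteq> 0" by (simp del: of_nat_Suc)
  from L R have "(\<Sum>k=1..Suc m. 4^k * cb (Suc m - k) / real k) * real (Suc m)
      = 2 * cb (Suc m) * Odd_harm (Suc m) * real (Suc m)" by (simp only:)
  then show ?case using mult_right_cancel[OF c] by blast
qed

lemma catalan_cb: "catalan n = cb n / real (Suc n)"
  by (simp add: catalan_def cb_def)

lemma P_lemma: "(\<Sum>j=0..m. 4^(m-j) * catalan j) = 2 * 4^m - cb (Suc m) / 2"
proof (induction m)
  case 0
  then show ?case by (simp add: catalan_def cb_def)
next
  case (Suc m)
  have "(\<Sum>j=0..Suc m. 4^(Suc m-j) * catalan j) = (\<Sum>j=0..m. 4 * (4^(m-j) * catalan j)) + catalan (Suc m)"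
    by (simp add: Suc_diff_le mult.assoc)
  also have "\<dots> = 4 * (2 * 4^m - cb (Suc m) / 2) + cb (Suc m) / real (Suc (Suc m))"
    unfolding sum_distrib_left[symmetric] Suc.IH catalan_cb[of "Suc m"] by simp
  also have "\<dots> = 2 * 4^Suc m - cb (Suc (Suc m)) / 2"
  proof -
    have r: "real (Suc (Suc m)) * cb (Suc (Suc m)) = (4 * real (Suc m) + 2) * cb (Suc m)"
      by (rule cb_rec)
    have "cb (Suc (Suc m)) = (4 * real (Suc m) + 2) * cb (Suc m) / real (Suc (Suc m))"
      using r by (simp add: field_simps)
    then show ?thesis by (simp add: field_simps)
  qed
  finally show ?case .
qed

theorem corollary2:
  fixes n :: nat
  shows "(\<Sum>j=0..n. 4 ^ (n - j) * catalan j * Harm (n - j))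
         = 2 ^ (2*n + 1) * Harm (n + 1) - real ((2*(n+1)) choose (n+1)) * Odd_harm (n + 1)"
proof -
  have "(\<Sum>j=0..n. 4 ^ (n - j) * catalan j * Harm (n - j))
      = (\<Sum>j=0..n. \<Sum>i=1..n-j. 4 ^ (n - j) * catalan j / real i)"
    by (simp add: Harm_def sum_distrib_left)
  also have "\<dots> = (\<Sum>i=1..n. \<Sum>j=0..n-i. 4 ^ (n - j) * catalan j / real i)"
    by (rule swap_sum)
  also have "\<dots> = (\<Sum>i=1..n. 4^i / real i * (\<Sum>j=0..n-i. 4 ^ (n - i - j) * catalan j))"
  proof (rule sum.cong[OF refl])
    fix i assume i: "i \<in> {1..n}"
    have "(\<Sum>j=0..n-i. 4 ^ (n - j) * catalan j / real i)
        = (\<Sum>j=0..n-i. 4^i / real i * (4 ^ (n - i - j) * catalan j))"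
    proof (rule sum.cong[OF refl])
      fix j assume j: "j \<in> {0..n-i}"
      have "n - j = i + (n - i - j)" using i j by auto
      then have "(4::real) ^ (n - j) = 4^i * 4^(n-i-j)" by (simp add: power_add)
      then show "4 ^ (n - j) * catalan j / real i = 4^i / real i * (4 ^ (n - i - j) * catalan j)"
        by simp
    qed
    then show "(\<Sum>j=0..n-i. 4 ^ (n - j) * catalan j / real i)
        = 4^i / real i * (\<Sum>j=0..n-i. 4 ^ (n - i - j) * catalan j)"
      by (simp add: sum_distrib_left)
  qed
  also have "\<dots> = (\<Sum>i=1..n. 4^i / real i * (2 * 4^(n-i) - cb (Suc (n-i)) / 2))"
    by (rule sum.cong[OF refl]) (simp only: P_lemma)
  also have "\<dots> = (\<Sum>i=1..n. 2 * 4^n / real i) - (\<Sum>i=1..n. 4^i * cb (Suc n - i) / real i) / 2"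
  proof -
    have "(\<Sum>i=1..n. 4^i / real i * (2 * 4^(n-i) - cb (Suc (n-i)) / 2))
        = (\<Sum>i=1..n. 2 * 4^n / real i - 4^i * cb (Suc n - i) / real i / 2)"
    proof (rule sum.cong[OF refl])
      fix i assume i: "i \<in> {1..n}"
      have "(4::real)^n = 4^i * 4^(n-i)" using i by (simp add: power_add[symmetric])
      moreover have "Suc (n-i) = Suc n - i" using i by auto
      moreover have "real i \<noteq> 0" using i by auto
      ultimately show "4^i / real i * (2 * 4^(n-i) - cb (Suc (n-i)) / 2)
          = 2 * 4^n / real i - 4^i * cb (Suc n - i) / real i / 2"
        by (simp add: field_simps)
    qed
    then show ?thesis by (simp add: sum_subtractf sum_divide_distrib)
  qed
  also have "(\<Sum>i=1..n. 4^i * cb (Suc n - i) / real i)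
      = 2 * cb (Suc n) * Odd_harm (Suc n) - 4^Suc n / real (Suc n)"
    using V_lemma[of "Suc n"] by simp
  also have "(\<Sum>i=1..n. 2 * 4^n / real i) = 2 * 4^n * Harm n"
    by (simp add: Harm_def sum_distrib_left)
  finally have "(\<Sum>j=0..n. 4 ^ (n - j) * catalan j * Harm (n - j))
      = 2 * 4^n * (Harm n + 1 / real (Suc n)) - cb (Suc n) * Odd_harm (Suc n)"
    by (simp add: field_simps)
  moreover have "Harm (n+1) = Harm n + 1 / real (Suc n)" by (simp add: Harm_def)
  moreover have "(2::real) ^ (2*n+1) = 2 * 4^n" by (simp add: power_mult)
  ultimately show ?thesis by (simp add: cb_def)
qed

end
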